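(* There is $N_0$ such that for all integers $N\ge N_0$ the following holds. Let $r,d$ be positive integers with $\gcd(d,r)=1$, let $\Pi=r(r+d)\cdots(r+(N-1)d)$, and perform the following elimination process: for every prime factor $p$ of $\Pi$, remove one term $r+id$ ($0\le i\le N-1$) for which $\mathrm{ord}_p(r+id)$ is maximal among all terms $r+jd$, $0\le j\le N-1$ (ties resolved arbitrarily; each term is removed at most once). Let $M$ be the total number of removed terms. Then either both $d<N^2$ and $r<N^2$, or $M>N/2$.
   Context: For a prime $p$ and a nonzero integer $m$, $\mathrm{ord}_p(m)$ denotes the largest integer $e$ with $p^e\mid m$. *)

theory Defs
  imports "HOL-Computational_Algebra.Primes"
begin

definition ap_prod :: "nat \<Rightarrow> nat \<Rightarrow> nat \<Rightarrow> nat" where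
  "ap_prod r d N = (\<Prod>i<N. r + i * d)"

end

theory Submission
  imports Defs
begin

lemma mult_le_self:
  fixes p n :: nat
  assumes "prime p" "n > 0"
  shows "multiplicity p n \<le> n"
proof -
  have "p ^ multiplicity p n dvd n" by (rule multiplicity_dvd)
  hence "p ^ multiplicity p n \<le> n" using assms(2) by (rule dvd_imp_le)
  moreover have "multiplicity p n < 2 ^ multiplicity p n" by simp
  moreover have "2 ^ multiplicity p n \<le> p ^ multiplicity p n"
    using prime_ge_2_nat[OF assms(1)] by (simp add: power_mono)
  ultimately show ?thesis by linarith
qed

lemma pdvd_iff:
  fixes p n :: nat
  assumes "prime p" "n > 0"
  shows "p ^ k dvd n \<longleftrightarrow> k \<le> multiplicity p n"
  using power_dvd_iff_le_multiplicity[of n p k] assms not_prime_unit[of p] prime_gt_1_nat[of p] by simp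

lemma mult_as_sum:
  fixes p n :: nat
  assumes "prime p" "n > 0" "multiplicity p n \<le> K"
  shows "multiplicity p n = (\<Sum>k\<in>{1..K}. if p ^ k dvd n then 1 else 0)"
proof -
  have "{1..K} \<inter> {k. p ^ k dvd n} = {1..multiplicity p n}"
    using assms by (auto simp: pdvd_iff)
  moreover have "(\<Sum>k\<in>{1..K}. if p ^ k dvd n then 1 else 0) = card ({1..K} \<inter> {k. p ^ k dvd n})"
    by (simp add: sum.If_cases)
  ultimately show ?thesis by simp
qed

lemma mult_prod_count:
  fixes p :: nat and g :: "nat \<Rightarrow> nat"
  assumes "prime p" "finite A" "\<forall>i\<in>A. g i > 0" "\<forall>i\<in>A. multiplicity p (g i) \<le> K"
  shows "multiplicity p (prod g A) = (\<Sum>k\<in>{1..K}. card {i\<in>A. p ^ k dvd g i})"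
proof -
  have "multiplicity p (prod g A) = (\<Sum>i\<in>A. multiplicity p (g i))"
    using assms by (intro prime_elem_multiplicity_prod_distrib) auto
  also have "\<dots> = (\<Sum>i\<in>A. \<Sum>k\<in>{1..K}. if p ^ k dvd g i then 1 else 0)"
    using assms by (intro sum.cong refl mult_as_sum) auto
  also have "\<dots> = (\<Sum>k\<in>{1..K}. \<Sum>i\<in>A. if p ^ k dvd g i then 1 else 0)"
    by (rule sum.swap)
  also have "\<dots> = (\<Sum>k\<in>{1..K}. card {i\<in>A. p ^ k dvd g i})"
    using assms(2) by (simp add: sum.If_cases Collect_conj_eq Int_commute)
  finally show ?thesis .
qed

lemma count_ap:
  fixes q r d N :: nat
  assumes "coprime q d" "i0 \<in> {i. i < N \<and> q dvd r + i * d}"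
  shows "card {i. i < N \<and> q dvd r + i * d} \<le> Suc (card {m\<in>{1..N-1}. q dvd m})"
proof -
  define A where "A = {i. i < N \<and> q dvd r + i * d}"
  have fin: "finite A" unfolding A_def by auto
  have ne: "A \<noteq> {}" using assms(2) unfolding A_def by auto
  define a where "a = Min A"
  have aA: "a \<in> A" using fin ne unfolding a_def by simp
  have amin: "\<And>i. i \<in> A \<Longrightarrow> a \<le> i" using fin unfolding a_def by simp
  have key: "\<And>i. i \<in> A \<Longrightarrow> q dvd i - a"
  proof -
    fix i assume iA: "i \<in> A"
    have "q dvd (r + i * d) - (r + a * d)" using iA aA unfolding A_def
      by (intro dvd_diff_nat) auto
    moreover have "(r + i * d) - (r + a * d) = (i - a) * d" using amin[OF iA]
      by (simp add: diff_mult_distrib)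
    ultimately have "q dvd (i - a) * d" by simp
    thus "q dvd i - a" using assms(1) by (simp add: coprime_dvd_mult_left_iff)
  qed
  have inj: "inj_on (\<lambda>i. i - a) (A - {a})"
  proof (rule inj_onI)
    fix x y assume xy: "x \<in> A - {a}" "y \<in> A - {a}" "x - a = y - a"
    hence "a \<le> x" "a \<le> y" using amin by auto
    with xy(3) show "x = y" by linarith
  qed
  have img: "(\<lambda>i. i - a) ` (A - {a}) \<subseteq> {m\<in>{1..N-1}. q dvd m}"
  proof
    fix x assume "x \<in> (\<lambda>i. i - a) ` (A - {a})"
    then obtain i where i: "i \<in> A" "i \<noteq> a" "x = i - a" by auto
    have "a \<le> i" using amin i by simp
    moreover have "i < N" using i unfolding A_def by simp
    ultimately show "x \<in> {m\<in>{1..N-1}. q dvd m}" using i key[OF i(1)] by auto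
  qed
  have "card (A - {a}) \<le> card {m\<in>{1..N-1}. q dvd m}"
    using card_inj_on_le[OF inj img] by simp
  moreover have "card (A - {a}) = card A - 1" using aA fin by simp
  moreover have "card A > 0" using fin ne by (simp add: card_gt_0_iff)
  ultimately show ?thesis unfolding A_def[symmetric] by linarith
qed

lemma fact_bound: "m \<ge> 2 \<Longrightarrow> fact (Suc m) < (Suc m) ^ m"
proof (induction m)
  case 0
  then show ?case by simp
next
  case (Suc m)
  show ?case
  proof (cases "m = 1")
    case True
    then show ?thesis by (simp add: fact_numeral)
  next
    case False
    with Suc.prems have IH: "fact (Suc m) < (Suc m) ^ m" using Suc.IH by simp
    have "fact (Suc (Suc m)) = Suc (Suc m) * fact (Suc m)" by simp
    also have "\<dots> < Suc (Suc m) * (Suc m) ^ m" by (rule mult_strict_left_mono[OF IH]) simp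
    also have "\<dots> \<le> Suc (Suc m) * (Suc (Suc m)) ^ m"
      by (intro mult_le_mono2 power_mono) simp_all
    finally show ?thesis by simp
  qed
qed


lemma key_dvd:
  fixes r d N :: nat and f :: "nat \<Rightarrow> nat"
  assumes r: "0 < r" and cop: "coprime d r"
    and hf: "\<forall>p. prime p \<and> p dvd ap_prod r d N \<longrightarrow>
         f p < N \<and> (\<forall>j<N. multiplicity p (r + j * d) \<le> multiplicity p (r + f p * d))"
  defines "S \<equiv> {..<N} - f ` {p. prime p \<and> p dvd ap_prod r d N}"
  shows "(\<Prod>i\<in>S. r + i * d) dvd fact (N - 1)"
proof -
  define t where "t = (\<lambda>i. r + i * d)"
  define P where "P = {p. prime p \<and> p dvd ap_prod r d N}"
  have finS: "finite S" unfolding S_def by auto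
  have tpos: "\<And>i. t i > 0" using r unfolding t_def by simp
  have pS: "prod t S > 0" using tpos finS by (simp add: prod_pos)
  have fF: "fact (N - 1) = (\<Prod>m\<in>{1..N-1}. m)" by (simp add: fact_prod)
  show ?thesis
    unfolding t_def[symmetric] fF
  proof (rule multiplicity_le_imp_dvd)
    show "prod t S \<noteq> 0" using pS by simp
  next
    fix p :: nat assume p: "prime p"
    define K where "K = prod t S + (N - 1)"
    have L: "multiplicity p (prod t S) = (\<Sum>k\<in>{1..K}. card {i\<in>S. p ^ k dvd t i})"
    proof (rule mult_prod_count[OF p finS])
      show "\<forall>i\<in>S. t i > 0" using tpos by simp
      show "\<forall>i\<in>S. multiplicity p (t i) \<le> K"
      proof
        fix i assume "i \<in> S"
        hence "t i dvd prod t S" using finS by (simp add: dvd_prodI)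
        hence "multiplicity p (t i) \<le> multiplicity p (prod t S)"
          using pS by (intro dvd_imp_multiplicity_le) auto
        also have "\<dots> \<le> prod t S" using mult_le_self[OF p pS] .
        finally show "multiplicity p (t i) \<le> K" unfolding K_def by simp
      qed
    qed
    have R: "multiplicity p (\<Prod>m\<in>{1..N-1}. m) = (\<Sum>k\<in>{1..K}. card {m\<in>{1..N-1}. p ^ k dvd m})"
    proof (rule mult_prod_count[OF p])
      show "\<forall>i\<in>{1..N-1}. multiplicity p i \<le> K"
      proof
        fix i assume i: "i \<in> {1..N-1}"
        hence "multiplicity p i \<le> i" using mult_le_self[OF p] by simp
        thus "multiplicity p i \<le> K" using i unfolding K_def by simp
      qed
    qed auto
    have "(\<Sum>k\<in>{1..K}. card {i\<in>S. p ^ k dvd t i}) \<le> (\<Sum>k\<in>{1..K}. card {m\<in>{1..N-1}. p ^ k dvd m})"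
    proof (rule sum_mono)
      fix k assume k: "k \<in> {1..K}"
      define A where "A = {i. i < N \<and> p ^ k dvd r + i * d}"
      have finA: "finite A" unfolding A_def by simp
      have sub: "{i\<in>S. p ^ k dvd t i} \<subseteq> A" unfolding A_def S_def t_def by auto
      show "card {i\<in>S. p ^ k dvd t i} \<le> card {m\<in>{1..N-1}. p ^ k dvd m}"
      proof (cases "A = {}")
        case True
        hence E: "{i\<in>S. p ^ k dvd t i} = {}" using sub by blast
        show ?thesis by (subst E) simp
      next
        case False
        then obtain i1 where i1: "i1 < N" "p ^ k dvd r + i1 * d" unfolding A_def by auto
        have pdt: "p dvd r + i1 * d" using i1(2) k
        proof -
          have "k \<noteq> 0" using k by simp
          hence "p dvd p ^ k" by simp
          thus ?thesis using i1(2) by (rule dvd_trans)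
        qed
        have "r + i1 * d dvd ap_prod r d N" unfolding ap_prod_def using i1(1)
          by (intro dvd_prodI) auto
        hence pP: "p dvd ap_prod r d N" using pdt dvd_trans by blast
        have ndd: "\<not> p dvd d"
        proof
          assume "p dvd d"
          hence "p dvd i1 * d" by simp
          hence "p dvd r" using pdt by (simp add: dvd_add_left_iff)
          with \<open>p dvd d\<close> cop have "is_unit p" by (meson coprime_common_divisor)
          with p show False by simp
        qed
        have cpd: "coprime (p ^ k) d" using prime_imp_coprime[OF p ndd] by simp
        from hf p pP have fp: "f p < N"
          and mx: "multiplicity p (r + i1 * d) \<le> multiplicity p (r + f p * d)" using i1(1) by auto
        have "k \<le> multiplicity p (r + i1 * d)" using i1(2) pdvd_iff[OF p] r by simp
        hence "p ^ k dvd r + f p * d" using mx pdvd_iff[OF p] r by simp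
        hence fpA: "f p \<in> A" unfolding A_def using fp by simp
        have "f p \<notin> S" unfolding S_def using p pP by auto
        hence sub2: "{i\<in>S. p ^ k dvd t i} \<subseteq> A - {f p}" using sub by auto
        have "card {i\<in>S. p ^ k dvd t i} \<le> card (A - {f p})"
          using finA sub2 by (intro card_mono) auto
        also have "\<dots> = card A - 1" using fpA finA by simp
        also have "card A \<le> Suc (card {m\<in>{1..N-1}. p ^ k dvd m})"
          unfolding A_def using count_ap[OF cpd] fpA unfolding A_def by blast
        hence "card A - 1 \<le> card {m\<in>{1..N-1}. p ^ k dvd m}" by simp
        finally show ?thesis .
      qed
    qed
    thus "multiplicity p (prod t S) \<le> multiplicity p (\<Prod>m\<in>{1..N-1}. m)" using L R by simp
  qed
qed

theorem corollary1:
  shows "\<exists>N0::nat. \<forall>N\<ge>N0. \<forall>(r::nat) (d::nat) (f::nat \<Rightarrow> nat).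
     0 < r \<longrightarrow> 0 < d \<longrightarrow> coprime d r \<longrightarrow>
     (\<forall>p. prime p \<and> p dvd ap_prod r d N \<longrightarrow>
         f p < N \<and> (\<forall>j<N. multiplicity p (r + j * d) \<le> multiplicity p (r + f p * d))) \<longrightarrow>
     ((d < N^2 \<and> r < N^2) \<or>
      2 * card (f ` {p. prime p \<and> p dvd ap_prod r d N}) > N)"
proof (intro exI[of _ 4] allI impI)
  fix N r d :: nat and f :: "nat \<Rightarrow> nat"
  assume N: "4 \<le> N" and r: "0 < r" and d: "0 < d" and cop: "coprime d r"
    and hf: "\<forall>p. prime p \<and> p dvd ap_prod r d N \<longrightarrow>
         f p < N \<and> (\<forall>j<N. multiplicity p (r + j * d) \<le> multiplicity p (r + f p * d))"
  define P where "P = {p. prime p \<and> p dvd ap_prod r d N}"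
  define S where "S = {..<N} - f ` P"
  define T where "T = S - {0}"
  define t where "t = (\<lambda>i. r + i * d)"
  show "(d < N^2 \<and> r < N^2) \<or> 2 * card (f ` P) > N"
  proof (rule ccontr)
    assume "\<not> ?thesis"
    hence big: "d \<ge> N^2 \<or> r \<ge> N^2" and small: "2 * card (f ` P) \<le> N" by auto
    have dv: "prod t S dvd fact (N - 1)" unfolding S_def P_def t_def by (rule key_dvd[OF r cop hf])
    have finS: "finite S" unfolding S_def by simp
    have RN: "f ` P \<subseteq> {..<N}" using hf unfolding P_def by auto
    have finR: "finite (f ` P)" using RN finite_subset by blast
    have cS: "card S = N - card (f ` P)" unfolding S_def using RN finR
      by (simp add: card_Diff_subset)
    have cT: "card T \<ge> card S - 1" unfolding T_def by (simp add: card_Diff_singleton_if)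
    have tpos: "\<And>i. t i > 0" using r unfolding t_def by simp
    have tT: "\<And>i. i \<in> T \<Longrightarrow> N^2 \<le> t i"
    proof -
      fix i assume "i \<in> T"
      hence "i \<ge> 1" unfolding T_def by auto
      hence "d \<le> i * d" by simp
      thus "N^2 \<le> t i" using big unfolding t_def by linarith
    qed
    have "(N^2) ^ card T = (\<Prod>i\<in>T. N^2)" by simp
    also have "\<dots> \<le> prod t T" by (rule prod_mono) (use tT in auto)
    also have "\<dots> \<le> prod t S"
    proof (cases "0 \<in> S")
      case True
      have "prod t S = t 0 * prod t T" unfolding T_def using True finS by (simp add: prod.remove)
      then show ?thesis using tpos[of 0] by simp
    next
      case False
      then show ?thesis unfolding T_def by simp
    qed
    also have "\<dots> \<le> fact (N - 1)" using dv by (rule dvd_imp_le) simp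
    also have "fact (N - 1) < (N - 1) ^ (N - 2)"
    proof -
      have e: "N - 1 = Suc (N - 2)" using N by linarith
      have "2 \<le> N - 2" using N by linarith
      hence "fact (Suc (N - 2)) < (Suc (N - 2)) ^ (N - 2)" by (rule fact_bound)
      thus ?thesis by (subst e)+ simp
    qed
    also have "\<dots> \<le> N ^ (N - 2)" by (simp add: power_mono)
    also have "\<dots> \<le> N ^ (2 * card T)"
    proof (rule power_increasing)
      show "N - 2 \<le> 2 * card T" using small cS cT by linarith
      show "1 \<le> N" using N by linarith
    qed
    finally have "(N^2) ^ card T < N ^ (2 * card T)" .
    thus False by (simp only: power_mult)
  qed
qed

end
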